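(* Let $G$ and $H$ be dicotic nonzugzwang scoring games all of whose terminal positions are numbers. Then for every $t\geq 0$, $Ls((G+H)_t)=Ls(G_t+H_t)$ and $Rs((G+H)_t)=Rs(G_t+H_t)$. Moreover $\sigma(G+H)\leq\max(\sigma(G),\sigma(H))$, and if $\sigma(H)<\sigma(G)$ then $\sigma(G+H)=\sigma(G)$. In particular, $(G+H)_{\sigma(G+H)}=G_{\sigma(G)}+H_{\sigma(H)}$.
   Context: A scoring game is $G=\langle G^L\mid G^R\rangle$ with $G^L,G^R$ finite nonempty sets of scoring games or empty sets decorated with a real, $\emptyset^s$; $\langle\emptyset^s\mid\emptyset^s\rangle$ is the number $s$. $Ls(\langle\emptyset^s\mid G^R\rangle)=s$, $Rs(\langle G^L\mid\emptyset^s\rangle)=s$, otherwise $Ls(G)=\max_{G^l\in G^L}Rs(G^l)$, $Rs(G)=\min_{G^r\in G^R}Ls(G^r)$. Disjunctive sum $G_1+G_2$: Left options are all $G_1^l+G_2$ and $G_1+G_2^l$, and if neither component has a Left option the Left side is $\emptyset^{\ell_1+\ell_2}$ ($\emptyset^{\ell_i}$ the Left side of $G_i$); symmetrically for Right. In particular $H+c$ for a number $c$ adds $c$ to every terminal score. Dicotic: at every position both players have options or neither; nonzugzwang: $Ls(H)\ge Rs(H)$ at every position $H$. Cooling: if $G$ is a number $k$, $G_t=k$ and $\sigma(G)=0$. Otherwise $\widetilde G_t=\langle \{G^l_t-t\}_{G^l\in G^L}\mid \{G^r_t+t\}_{G^r\in G^R}\rangle$, $t_0=\min\{t\ge0: Ls(\widetilde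 G_t)=Rs(\widetilde G_t)\}$ (exists for dicotic nonzugzwang games), $G_t=\widetilde G_t$ for $t\le t_0$ and $G_t$ is the number $Ls(\widetilde G_{t_0})$ for $t>t_0$; $\sigma(G)=t_0$ is the temperature. For $t\geq\sigma(G)$, $G_t$ is a number. *)

theory Defs
  imports Complex_Main
begin

text \<open>A side is either a finite nonempty set of
  options (represented by a list, Inl) or an empty set decorated with a real score
  (Inr s, i.e. the empty set with superscript s). Nonemptiness of option lists is
  imposed by the well-formedness predicate is_sg.\<close>

datatype sg = SG (lside: "sg list + real") (rside: "sg list + real")

definition lopts :: "sg \<Rightarrow> sg list" where
  "lopts G = (case lside G of Inl xs \<Rightarrow> xs | Inr _ \<Rightarrow> [])"

definition ropts :: "sg \<Rightarrow> sg list" where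
  "ropts G = (case rside G of Inl xs \<Rightarrow> xs | Inr _ \<Rightarrow> [])"

definition lemp :: "sg \<Rightarrow> real" where
  "lemp G = (case lside G of Inl _ \<Rightarrow> 0 | Inr s \<Rightarrow> s)"

definition remp :: "sg \<Rightarrow> real" where
  "remp G = (case rside G of Inl _ \<Rightarrow> 0 | Inr s \<Rightarrow> s)"

lemma size_lopts: "g \<in> set (lopts G) \<Longrightarrow> size g < size G"
proof (cases G)
  case (SG L R)
  assume g: "g \<in> set (lopts G)"
  then obtain xs where xs: "lside G = Inl xs" "g \<in> set xs"
    by (auto simp: lopts_def split: sum.splits dest: sym)
  have "size g \<le> size_list size xs"
    using xs(2) by (rule size_list_estimation') simp
  then show ?thesis using xs(1) SG by auto
qed

lemma size_ropts: "g \<in> set (ropts G) \<Longrightarrow> size g < size G"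
proof (cases G)
  case (SG L R)
  assume g: "g \<in> set (ropts G)"
  then obtain xs where xs: "rside G = Inl xs" "g \<in> set xs"
    by (auto simp: ropts_def split: sum.splits dest: sym)
  have "size g \<le> size_list size xs"
    using xs(2) by (rule size_list_estimation') simp
  then show ?thesis using xs(1) SG by auto
qed

definition num :: "real \<Rightarrow> sg" where
  "num s = SG (Inr s) (Inr s)"

definition is_num :: "sg \<Rightarrow> bool" where
  "is_num G \<longleftrightarrow> (\<exists>s. G = num s)"

fun all_pos :: "(sg \<Rightarrow> bool) \<Rightarrow> sg \<Rightarrow> bool" where
  "all_pos P (SG L R) \<longleftrightarrow> P (SG L R)
     \<and> (case L of Inl xs \<Rightarrow> (\<forall>g\<in>set xs. all_pos P g) | Inr _ \<Rightarrow> True)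
     \<and> (case R of Inl xs \<Rightarrow> (\<forall>g\<in>set xs. all_pos P g) | Inr _ \<Rightarrow> True)"

definition is_sg :: "sg \<Rightarrow> bool" where
  "is_sg G \<longleftrightarrow> all_pos (\<lambda>H. lside H \<noteq> Inl [] \<and> rside H \<noteq> Inl []) G"

fun Ls :: "sg \<Rightarrow> real" and Rs :: "sg \<Rightarrow> real" where
  "Ls (SG L R) = (case L of Inr s \<Rightarrow> s | Inl xs \<Rightarrow> Max (set (map Rs xs)))"
| "Rs (SG L R) = (case R of Inr s \<Rightarrow> s | Inl xs \<Rightarrow> Min (set (map Ls xs)))"

definition dicotic :: "sg \<Rightarrow> bool" where
  "dicotic G \<longleftrightarrow> all_pos (\<lambda>H. (lopts H = []) \<longleftrightarrow> (ropts H = [])) G"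

definition nonzugzwang :: "sg \<Rightarrow> bool" where
  "nonzugzwang G \<longleftrightarrow> all_pos (\<lambda>H. Ls H \<ge> Rs H) G"

definition terminal_numbers :: "sg \<Rightarrow> bool" where
  "terminal_numbers G \<longleftrightarrow> all_pos (\<lambda>H. lopts H = [] \<and> ropts H = [] \<longrightarrow> is_num H) G"

function gsum :: "sg \<Rightarrow> sg \<Rightarrow> sg" where
  "gsum G H = SG
     (if lopts G = [] \<and> lopts H = [] then Inr (lemp G + lemp H)
      else Inl (map (\<lambda>g. gsum g H) (lopts G) @ map (\<lambda>h. gsum G h) (lopts H)))
     (if ropts G = [] \<and> ropts H = [] then Inr (remp G + remp H)
      else Inl (map (\<lambda>g. gsum g H) (ropts G) @ map (\<lambda>h. gsum G h) (ropts H)))"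
  by auto
termination
  by (relation "measure (\<lambda>(G, H). size G + size H)")
     (auto dest: size_lopts size_ropts)

text \<open>H + c for a number c: add c to every terminal score.\<close>
fun shift :: "real \<Rightarrow> sg \<Rightarrow> sg" where
  "shift c (SG L R) = SG
     (case L of Inl xs \<Rightarrow> Inl (map (shift c) xs) | Inr s \<Rightarrow> Inr (s + c))
     (case R of Inl xs \<Rightarrow> Inl (map (shift c) xs) | Inr s \<Rightarrow> Inr (s + c))"

function cool :: "sg \<Rightarrow> real \<Rightarrow> sg" where
  "cool G t =
    (if is_num G then G
     else
       (let tl = (\<lambda>s. SG
                 (case lside G of Inl xs \<Rightarrow> Inl (map (\<lambda>g. shift (- s) (cool g s)) xs) | Inr a \<Rightarrow> Inr a)
                 (case rside G of Inl xs \<Rightarrow> Inl (map (\<lambda>g. shift s (cool g s)) xs) | Inr a \<Rightarrow> Inr a));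
            t0 = (LEAST s. 0 \<le> s \<and> Ls (tl s) = Rs (tl s))
        in if t \<le> t0 then tl t else num (Ls (tl t0))))"
  by auto
termination
  by (relation "measure (\<lambda>(G, t). size G)")
     (auto intro: size_lopts size_ropts simp: lopts_def ropts_def)

definition cool_tilde :: "sg \<Rightarrow> real \<Rightarrow> sg" where
  "cool_tilde G s = SG
     (case lside G of Inl xs \<Rightarrow> Inl (map (\<lambda>g. shift (- s) (cool g s)) xs) | Inr a \<Rightarrow> Inr a)
     (case rside G of Inl xs \<Rightarrow> Inl (map (\<lambda>g. shift s (cool g s)) xs) | Inr a \<Rightarrow> Inr a)"

definition temp :: "sg \<Rightarrow> real" where
  "temp G = (if is_num G then 0
             else (LEAST s. 0 \<le> s \<and> Ls (cool_tilde G s) = Rs (cool_tilde G s)))"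

end

theory Submission
  imports Defs
begin

declare cool.simps[simp del] gsum.simps[simp del]

definition good :: "sg \<Rightarrow> bool" where
  "good X \<longleftrightarrow> is_sg X \<and> dicotic X \<and> nonzugzwang X \<and> terminal_numbers X"

lemma Ls_num[simp]: "Ls (num s) = s" and Rs_num[simp]: "Rs (num s) = s"
  by (simp_all add: num_def)

lemma good_num[simp]: "good (num s)"
  by (simp add: good_def num_def is_sg_def dicotic_def nonzugzwang_def terminal_numbers_def
      lopts_def ropts_def is_num_def)

lemma good_cases:
  assumes "good X"
  shows "(\<exists>s. X = num s) \<or> (\<exists>xs ys. X = SG (Inl xs) (Inl ys) \<and> xs \<noteq> [] \<and> ys \<noteq> [] \<and>
     Rs X \<le> Ls X \<and> (\<forall>g\<in>set xs. good g) \<and> (\<forall>g\<in>set ys. good g))"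
proof (cases X)
  case (SG L R)
  show ?thesis
  proof (cases L)
    case (Inl xs)
    then obtain ys where R: "R = Inl ys" "ys \<noteq> []" "xs \<noteq> []"
      using assms SG unfolding good_def is_sg_def dicotic_def
      by (cases R) (auto simp: lopts_def ropts_def)
    then show ?thesis using assms SG Inl
      unfolding good_def is_sg_def dicotic_def nonzugzwang_def terminal_numbers_def
      by auto
  next
    case (Inr a)
    then obtain b where R: "R = Inr b"
      using assms SG unfolding good_def is_sg_def dicotic_def
      by (cases R) (auto simp: lopts_def ropts_def)
    then show ?thesis using assms SG Inr
      unfolding good_def terminal_numbers_def
      by (auto simp: lopts_def ropts_def is_num_def num_def)
  qed
qed

lemma good_SG:
  assumes "xs \<noteq> []" "ys \<noteq> []" "Rs (SG (Inl xs) (Inl ys)) \<le> Ls (SG (Inl xs) (Inl ys))"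
    "\<forall>g\<in>set xs. good g" "\<forall>g\<in>set ys. good g"
  shows "good (SG (Inl xs) (Inl ys))"
  using assms unfolding good_def is_sg_def dicotic_def nonzugzwang_def terminal_numbers_def
  by (auto simp: lopts_def ropts_def simp del: Ls.simps Rs.simps)

lemma size_optL: "g \<in> set xs \<Longrightarrow> size g < size (SG (Inl xs) R)"
  using size_lopts[of g "SG (Inl xs) R"] by (simp add: lopts_def)
lemma size_optR: "g \<in> set ys \<Longrightarrow> size g < size (SG L (Inl ys))"
  using size_ropts[of g "SG L (Inl ys)"] by (simp add: ropts_def)

lemma good_induct[consumes 1, case_names num SG]:
  assumes "good X"
    and "\<And>s. P (num s)"
    and "\<And>xs ys. xs \<noteq> [] \<Longrightarrow> ys \<noteq> [] \<Longrightarrow> Rs (SG (Inl xs) (Inl ys)) \<le> Ls (SG (Inl xs) (Inl ys))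
      \<Longrightarrow> (\<forall>g\<in>set xs. good g \<and> P g) \<Longrightarrow> (\<forall>g\<in>set ys. good g \<and> P g) \<Longrightarrow> P (SG (Inl xs) (Inl ys))"
  shows "P X"
  using assms(1)
proof (induction "size X" arbitrary: X rule: less_induct)
  case less
  from good_cases[OF less.prems] show ?case
  proof
    assume "\<exists>s. X = num s" then show ?thesis using assms(2) by auto
  next
    assume "\<exists>xs ys. X = SG (Inl xs) (Inl ys) \<and> xs \<noteq> [] \<and> ys \<noteq> [] \<and>
     Rs X \<le> Ls X \<and> (\<forall>g\<in>set xs. good g) \<and> (\<forall>g\<in>set ys. good g)"
    then obtain xs ys where X: "X = SG (Inl xs) (Inl ys)" "xs \<noteq> []" "ys \<noteq> []" "Rs X \<le> Ls X"
      "\<forall>g\<in>set xs. good g" "\<forall>g\<in>set ys. good g" by blast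
    show ?thesis unfolding X(1)
    proof (rule assms(3))
      have "P g" if "g \<in> set xs" for g
        using less.hyps[of g] X size_optL[OF that, of "Inl ys"] that by auto
      then show "\<forall>g\<in>set xs. good g \<and> P g" using X by auto
      have "P g" if "g \<in> set ys" for g
        using less.hyps[of g] X size_optR[OF that, of "Inl xs"] that by auto
      then show "\<forall>g\<in>set ys. good g \<and> P g" using X by auto
    qed (use X in auto)
  qed
qed

lemma Ls_Inl: "Ls (SG (Inl xs) R) = Max (Rs ` set xs)" by simp
lemma Rs_Inl: "Rs (SG L (Inl ys)) = Min (Ls ` set ys)" by simp

lemma le_Ls_iff: "xs \<noteq> [] \<Longrightarrow> c \<le> Ls (SG (Inl xs) R) \<longleftrightarrow> (\<exists>x\<in>set xs. c \<le> Rs x)"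
  unfolding Ls_Inl by (subst Max_ge_iff) auto
lemma Ls_le_iff: "xs \<noteq> [] \<Longrightarrow> Ls (SG (Inl xs) R) \<le> c \<longleftrightarrow> (\<forall>x\<in>set xs. Rs x \<le> c)"
  unfolding Ls_Inl by (subst Max_le_iff) auto
lemma le_Rs_iff: "ys \<noteq> [] \<Longrightarrow> c \<le> Rs (SG L (Inl ys)) \<longleftrightarrow> (\<forall>x\<in>set ys. c \<le> Ls x)"
  unfolding Rs_Inl by (subst Min_ge_iff) auto
lemma Rs_le_iff: "ys \<noteq> [] \<Longrightarrow> Rs (SG L (Inl ys)) \<le> c \<longleftrightarrow> (\<exists>x\<in>set ys. Ls x \<le> c)"
  unfolding Rs_Inl by (subst Min_le_iff) auto

declare Ls.simps[simp del] Rs.simps[simp del]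

lemma shift_num[simp]: "shift c (num s) = num (s + c)" by (simp add: num_def)
lemma shift_SG[simp]: "shift c (SG (Inl xs) (Inl ys)) = SG (Inl (map (shift c) xs)) (Inl (map (shift c) ys))"
  by simp

lemma Ls_map: "Ls (SG (Inl (map f xs)) R) = Max ((\<lambda>x. Rs (f x)) ` set xs)"
  by (simp add: Ls_Inl image_image)
lemma Rs_map: "Rs (SG L (Inl (map f xs))) = Min ((\<lambda>x. Ls (f x)) ` set xs)"
  by (simp add: Rs_Inl image_image)

lemma shift_stops: "good X \<Longrightarrow> Ls (shift c X) = Ls X + c \<and> Rs (shift c X) = Rs X + c"
proof (induction rule: good_induct)
  case (num s) then show ?case by simp
next
  case (SG xs ys)
  have "Ls (shift c (SG (Inl xs) (Inl ys))) = Max ((\<lambda>x. Rs x + c) ` set xs)"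
    unfolding shift_SG Ls_map using SG by (intro arg_cong[where f=Max] image_cong) auto
  also have "\<dots> = Ls (SG (Inl xs) (Inl ys)) + c"
    using SG by (simp add: Max_add_commute Ls_Inl)
  moreover have "Rs (shift c (SG (Inl xs) (Inl ys))) = Min ((\<lambda>x. Ls x + c) ` set ys)"
    unfolding shift_SG Rs_map using SG by (intro arg_cong[where f=Min] image_cong) auto
  moreover have "Min ((\<lambda>x. Ls x + c) ` set ys) = Rs (SG (Inl xs) (Inl ys)) + c"
    using SG by (simp add: Min_add_commute Rs_Inl)
  ultimately show ?case by simp
qed

lemma Ls_shift: "good X \<Longrightarrow> Ls (shift c X) = Ls X + c" using shift_stops by blast
lemma Rs_shift: "good X \<Longrightarrow> Rs (shift c X) = Rs X + c" using shift_stops by blast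

lemma good_shift: "good X \<Longrightarrow> good (shift c X)"
proof (induction rule: good_induct)
  case (num s) then show ?case by simp
next
  case (SG xs ys)
  have g: "good (SG (Inl xs) (Inl ys))" using SG by (intro good_SG) auto
  have "Rs (shift c (SG (Inl xs) (Inl ys))) \<le> Ls (shift c (SG (Inl xs) (Inl ys)))"
    unfolding Ls_shift[OF g] Rs_shift[OF g] using SG by simp
  then show ?case unfolding shift_SG using SG by (intro good_SG) auto
qed

lemma shift_shift: "shift a (shift b X) = shift (b + a) X"
proof (induction X)
  case (SG L R)
  then show ?case by (cases L; cases R) (auto simp: algebra_simps)
qed

lemma shift_0: "shift 0 X = X"
proof (induction X)
  case (SG L R)
  then show ?case by (cases L; cases R) (auto simp: map_idI)
qed


lemma good_obtain[consumes 1, case_names num SG]: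
  assumes "good X"
  obtains (num) s where "X = num s"
  | (SG) xs ys where "X = SG (Inl xs) (Inl ys)" "xs \<noteq> []" "ys \<noteq> []" "Rs X \<le> Ls X"
      "\<forall>g\<in>set xs. good g" "\<forall>g\<in>set ys. good g"
  using good_cases[OF assms] by blast

lemma good_RsLs: "good X \<Longrightarrow> Rs X \<le> Ls X"
  by (erule good_obtain) auto

lemma pair_induct:
  assumes "good X" "good Y"
    and "\<And>X Y. good X \<Longrightarrow> good Y \<Longrightarrow>
      (\<And>X' Y'. size X' + size Y' < size X + size Y \<Longrightarrow> good X' \<Longrightarrow> good Y' \<Longrightarrow> P X' Y') \<Longrightarrow> P X Y"
  shows "P X Y"
  using assms(1,2)
proof (induction "size X + size Y" arbitrary: X Y rule: less_induct)
  case less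
  show ?case by (rule assms(3)[OF less.prems]) (use less.hyps in auto)
qed

lemma le_Ls_app: "xs \<noteq> [] \<Longrightarrow> c \<le> Ls (SG (Inl (map f xs @ map g us)) R) \<longleftrightarrow>
   (\<exists>x\<in>set xs. c \<le> Rs (f x)) \<or> (\<exists>u\<in>set us. c \<le> Rs (g u))"
  by (subst le_Ls_iff) auto
lemma Ls_le_app: "xs \<noteq> [] \<Longrightarrow> Ls (SG (Inl (map f xs @ map g us)) R) \<le> c \<longleftrightarrow>
   (\<forall>x\<in>set xs. Rs (f x) \<le> c) \<and> (\<forall>u\<in>set us. Rs (g u) \<le> c)"
  by (subst Ls_le_iff) auto
lemma le_Rs_app: "xs \<noteq> [] \<Longrightarrow> c \<le> Rs (SG L (Inl (map f xs @ map g us))) \<longleftrightarrow>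
   (\<forall>x\<in>set xs. c \<le> Ls (f x)) \<and> (\<forall>u\<in>set us. c \<le> Ls (g u))"
  by (subst le_Rs_iff) auto
lemma Rs_le_app: "xs \<noteq> [] \<Longrightarrow> Rs (SG L (Inl (map f xs @ map g us))) \<le> c \<longleftrightarrow>
   (\<exists>x\<in>set xs. Ls (f x) \<le> c) \<or> (\<exists>u\<in>set us. Ls (g u) \<le> c)"
  by (subst Rs_le_iff) auto

lemma gsum_SG:
  assumes "xs \<noteq> []" "ys \<noteq> []"
  shows "gsum (SG (Inl xs) (Inl ys)) (SG (Inl us) (Inl vs)) =
    SG (Inl (map (\<lambda>g. gsum g (SG (Inl us) (Inl vs))) xs @ map (\<lambda>h. gsum (SG (Inl xs) (Inl ys)) h) us))
       (Inl (map (\<lambda>g. gsum g (SG (Inl us) (Inl vs))) ys @ map (\<lambda>h. gsum (SG (Inl xs) (Inl ys)) h) vs))"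
  using assms by (subst gsum.simps) (simp add: lopts_def ropts_def)

lemma gsum_num_left: "good Y \<Longrightarrow> gsum (num x) Y = shift x Y"
proof (induction rule: good_induct)
  case (num s)
  then show ?case by (subst gsum.simps) (simp add: num_def lopts_def ropts_def lemp_def remp_def add.commute)
next
  case (SG us vs)
  then show ?case by (subst gsum.simps) (simp add: num_def lopts_def ropts_def)
qed

lemma gsum_num_right: "good X \<Longrightarrow> gsum X (num y) = shift y X"
proof (induction rule: good_induct)
  case (num s)
  then show ?case by (subst gsum.simps) (simp add: num_def lopts_def ropts_def lemp_def remp_def)
next
  case (SG us vs)
  then show ?case by (subst gsum.simps) (simp add: num_def lopts_def ropts_def)
qed

definition sumP :: "sg \<Rightarrow> sg \<Rightarrow> bool" where
  "sumP X Y \<longleftrightarrow> Ls X + Rs Y \<le> Ls (gsum X Y) \<and> Rs X + Ls Y \<le> Ls (gsum X Y)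
     \<and> Rs X + Rs Y \<le> Rs (gsum X Y) \<and> Rs (gsum X Y) \<le> Rs X + Ls Y
     \<and> Rs (gsum X Y) \<le> Ls X + Rs Y \<and> Ls (gsum X Y) \<le> Ls X + Ls Y"

lemma sumP_all: assumes "good X" "good Y" shows "sumP X Y"
proof (rule pair_induct[of X Y sumP, OF assms])
  fix X Y assume "good X" "good Y" and
    IH: "\<And>X' Y'. size X' + size Y' < size X + size Y \<Longrightarrow> good X' \<Longrightarrow> good Y' \<Longrightarrow> sumP X' Y'"
  show "sumP X Y"
  using \<open>good X\<close> proof (cases rule: good_obtain)
    case (num x)
    then show ?thesis using good_RsLs[OF \<open>good Y\<close>]
      by (simp add: sumP_def gsum_num_left \<open>good Y\<close> Ls_shift Rs_shift)
  next
    case X: (SG xs ys)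
    show ?thesis
    using \<open>good Y\<close> proof (cases rule: good_obtain)
      case (num y)
      then show ?thesis using good_RsLs[OF \<open>good X\<close>]
        by (simp add: sumP_def gsum_num_right \<open>good X\<close> Ls_shift Rs_shift)
    next
      case Y: (SG us vs)
      have ihx: "sumP g Y" if "g \<in> set xs \<union> set ys" for g
        using that IH[of g Y] X size_optL[of g xs "Inl ys"] size_optR[of g ys "Inl xs"] \<open>good Y\<close> by auto
      have ihy: "sumP X h" if "h \<in> set us \<union> set vs" for h
        using that IH[of X h] Y size_optL[of h us "Inl vs"] size_optR[of h vs "Inl us"] \<open>good X\<close> by auto
      have K: "gsum X Y = SG (Inl (map (\<lambda>g. gsum g Y) xs @ map (\<lambda>h. gsum X h) us))
                 (Inl (map (\<lambda>g. gsum g Y) ys @ map (\<lambda>h. gsum X h) vs))"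
        unfolding X(1) Y(1) by (rule gsum_SG) (use X in auto)
      obtain g1 where g1: "g1 \<in> set xs" "Ls X \<le> Rs g1"
        using le_Ls_iff[of xs "Ls X" "Inl ys"] X by auto
      obtain h1 where h1: "h1 \<in> set us" "Ls Y \<le> Rs h1"
        using le_Ls_iff[of us "Ls Y" "Inl vs"] Y by auto
      obtain g2 where g2: "g2 \<in> set ys" "Ls g2 \<le> Rs X"
        using Rs_le_iff[of ys "Inl xs" "Rs X"] X by auto
      obtain h2 where h2: "h2 \<in> set vs" "Ls h2 \<le> Rs Y"
        using Rs_le_iff[of vs "Inl us" "Rs Y"] Y by auto
      have lx: "Rs g \<le> Ls X" if "g \<in> set xs" for g using that X Ls_le_iff[of xs "Inl ys" "Ls X"] by auto
      have ly: "Rs h \<le> Ls Y" if "h \<in> set us" for h using that Y Ls_le_iff[of us "Inl vs" "Ls Y"] by auto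
      have rx: "Rs X \<le> Ls g" if "g \<in> set ys" for g using that X le_Rs_iff[of ys "Rs X" "Inl xs"] by auto
      have ry: "Rs Y \<le> Ls h" if "h \<in> set vs" for h using that Y le_Rs_iff[of vs "Rs Y" "Inl us"] by auto
      have 1: "Ls X + Rs Y \<le> Ls (gsum X Y)"
        unfolding K le_Ls_app[OF X(2)] using g1 ihx[of g1] by (force simp: sumP_def)
      have 2: "Rs X + Ls Y \<le> Ls (gsum X Y)"
        unfolding K le_Ls_app[OF X(2)] using h1 ihy[of h1] by (force simp: sumP_def)
      have 3: "Rs X + Rs Y \<le> Rs (gsum X Y)"
        unfolding K le_Rs_app[OF X(3)]
      proof safe
        fix g assume "g \<in> set ys"
        then show "Rs X + Rs Y \<le> Ls (gsum g Y)" using ihx[of g] rx[of g] by (force simp: sumP_def)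
      next
        fix h assume "h \<in> set vs"
        then show "Rs X + Rs Y \<le> Ls (gsum X h)" using ihy[of h] ry[of h] by (force simp: sumP_def)
      qed
      have 4: "Rs (gsum X Y) \<le> Rs X + Ls Y"
        unfolding K Rs_le_app[OF X(3)] using g2 ihx[of g2] by (force simp: sumP_def)
      have 5: "Rs (gsum X Y) \<le> Ls X + Rs Y"
        unfolding K Rs_le_app[OF X(3)] using h2 ihy[of h2] by (force simp: sumP_def)
      have 6: "Ls (gsum X Y) \<le> Ls X + Ls Y"
        unfolding K Ls_le_app[OF X(2)]
      proof safe
        fix g assume "g \<in> set xs"
        then show "Rs (gsum g Y) \<le> Ls X + Ls Y" using ihx[of g] lx[of g] by (force simp: sumP_def)
      next
        fix h assume "h \<in> set us"
        then show "Rs (gsum X h) \<le> Ls X + Ls Y" using ihy[of h] ly[of h] by (force simp: sumP_def)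
      qed
      show ?thesis using 1 2 3 4 5 6 by (simp add: sumP_def)
    qed
  qed
qed


lemma sum_nonzz: "good X \<Longrightarrow> good Y \<Longrightarrow> Rs (gsum X Y) \<le> Ls (gsum X Y)"
  using sumP_all[of X Y] by (simp add: sumP_def)

lemma good_gsum: assumes "good X" "good Y" shows "good (gsum X Y)"
proof (rule pair_induct[of X Y "\<lambda>X Y. good (gsum X Y)", OF assms])
  fix X Y assume gX: "good X" and gY: "good Y" and
    IH: "\<And>X' Y'. size X' + size Y' < size X + size Y \<Longrightarrow> good X' \<Longrightarrow> good Y' \<Longrightarrow> good (gsum X' Y')"
  show "good (gsum X Y)"
    using gX
  proof (cases rule: good_obtain)
    case (num x) then show ?thesis using gY by (simp add: gsum_num_left good_shift)
  next
    case X: (SG xs ys)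
    show ?thesis using gY
    proof (cases rule: good_obtain)
      case (num y) then show ?thesis using gX by (simp add: gsum_num_right good_shift)
    next
      case Y: (SG us vs)
      have ihx: "good (gsum g Y)" if "g \<in> set xs \<union> set ys" for g
        using that IH[of g Y] X size_optL[of g xs "Inl ys"] size_optR[of g ys "Inl xs"] gY by auto
      have ihy: "good (gsum X h)" if "h \<in> set us \<union> set vs" for h
        using that IH[of X h] Y size_optL[of h us "Inl vs"] size_optR[of h vs "Inl us"] gX by auto
      have K: "gsum X Y = SG (Inl (map (\<lambda>g. gsum g Y) xs @ map (\<lambda>h. gsum X h) us))
                 (Inl (map (\<lambda>g. gsum g Y) ys @ map (\<lambda>h. gsum X h) vs))"
        unfolding X(1) Y(1) by (rule gsum_SG) (use X in auto)
      show ?thesis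
        using sum_nonzz[OF gX gY] unfolding K
        by (intro good_SG) (use X Y ihx ihy in auto)
    qed
  qed
qed

lemma gsum_shift_left: assumes "good X" "good Y" shows "gsum (shift c X) Y = shift c (gsum X Y)"
proof (rule pair_induct[of X Y "\<lambda>X Y. gsum (shift c X) Y = shift c (gsum X Y)", OF assms])
  fix X Y assume gX: "good X" and gY: "good Y" and
    IH: "\<And>X' Y'. size X' + size Y' < size X + size Y \<Longrightarrow> good X' \<Longrightarrow> good Y' \<Longrightarrow> gsum (shift c X') Y' = shift c (gsum X' Y')"
  show "gsum (shift c X) Y = shift c (gsum X Y)"
    using gX
  proof (cases rule: good_obtain)
    case (num x) then show ?thesis using gY by (simp add: gsum_num_left shift_shift)
  next
    case X: (SG xs ys)
    show ?thesis using gY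
    proof (cases rule: good_obtain)
      case (num y) then show ?thesis using gX good_shift[OF gX, of c]
        by (simp add: gsum_num_right shift_shift add.commute del: shift_SG)
    next
      case Y: (SG us vs)
      have ihx: "gsum (shift c g) Y = shift c (gsum g Y)" if "g \<in> set xs \<union> set ys" for g
        using that IH[of g Y] X size_optL[of g xs "Inl ys"] size_optR[of g ys "Inl xs"] gY by auto
      have ihy: "gsum (shift c X) h = shift c (gsum X h)" if "h \<in> set us \<union> set vs" for h
        using that IH[of X h] Y size_optL[of h us "Inl vs"] size_optR[of h vs "Inl us"] gX by auto
      have K: "gsum X Y = SG (Inl (map (\<lambda>g. gsum g Y) xs @ map (\<lambda>h. gsum X h) us))
                 (Inl (map (\<lambda>g. gsum g Y) ys @ map (\<lambda>h. gsum X h) vs))"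
        unfolding X(1) Y(1) by (rule gsum_SG) (use X in auto)
      have SX: "shift c X = SG (Inl (map (shift c) xs)) (Inl (map (shift c) ys))" using X by simp
      have K2: "gsum (shift c X) Y = SG (Inl (map (\<lambda>g. gsum g Y) (map (shift c) xs) @ map (\<lambda>h. gsum (shift c X) h) us))
                 (Inl (map (\<lambda>g. gsum g Y) (map (shift c) ys) @ map (\<lambda>h. gsum (shift c X) h) vs))"
        unfolding SX Y(1) by (rule gsum_SG) (use X in auto)
      show ?thesis unfolding K2 K using ihx ihy by simp
    qed
  qed
qed

lemma gsum_shift_right: assumes "good X" "good Y" shows "gsum X (shift c Y) = shift c (gsum X Y)"
proof (rule pair_induct[of X Y "\<lambda>X Y. gsum X (shift c Y) = shift c (gsum X Y)", OF assms])
  fix X Y assume gX: "good X" and gY: "good Y" and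
    IH: "\<And>X' Y'. size X' + size Y' < size X + size Y \<Longrightarrow> good X' \<Longrightarrow> good Y' \<Longrightarrow> gsum X' (shift c Y') = shift c (gsum X' Y')"
  show "gsum X (shift c Y) = shift c (gsum X Y)"
    using gX
  proof (cases rule: good_obtain)
    case (num x) then show ?thesis using gY good_shift[OF gY, of c] by (simp add: gsum_num_left shift_shift add.commute)
  next
    case X: (SG xs ys)
    show ?thesis using gY
    proof (cases rule: good_obtain)
      case (num y) then show ?thesis using gX
        by (simp add: gsum_num_right shift_shift del: shift_SG)
    next
      case Y: (SG us vs)
      have ihx: "gsum g (shift c Y) = shift c (gsum g Y)" if "g \<in> set xs \<union> set ys" for g
        using that IH[of g Y] X size_optL[of g xs "Inl ys"] size_optR[of g ys "Inl xs"] gY by auto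
      have ihy: "gsum X (shift c h) = shift c (gsum X h)" if "h \<in> set us \<union> set vs" for h
        using that IH[of X h] Y size_optL[of h us "Inl vs"] size_optR[of h vs "Inl us"] gX by auto
      have K: "gsum X Y = SG (Inl (map (\<lambda>g. gsum g Y) xs @ map (\<lambda>h. gsum X h) us))
                 (Inl (map (\<lambda>g. gsum g Y) ys @ map (\<lambda>h. gsum X h) vs))"
        unfolding X(1) Y(1) by (rule gsum_SG) (use X in auto)
      have SY: "shift c Y = SG (Inl (map (shift c) us)) (Inl (map (shift c) vs))" using Y by simp
      have K2: "gsum X (shift c Y) = SG (Inl (map (\<lambda>g. gsum g (shift c Y)) xs @ map (\<lambda>h. gsum X h) (map (shift c) us)))
                 (Inl (map (\<lambda>g. gsum g (shift c Y)) ys @ map (\<lambda>h. gsum X h) (map (shift c) vs)))"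
        unfolding SY X(1) by (rule gsum_SG) (use X in auto)
      show ?thesis unfolding K2 K using ihx ihy by simp
    qed
  qed
qed




lemma cool_eq: "\<not> is_num G \<Longrightarrow> cool G t = (if t \<le> temp G then cool_tilde G t else num (Ls (cool_tilde G (temp G))))"
  by (subst cool.simps) (simp add: Let_def temp_def cool_tilde_def)

lemma is_num_num[simp]: "is_num (num s)" by (auto simp: is_num_def)
lemma not_num_SG[simp]: "\<not> is_num (SG (Inl xs) (Inl ys))" by (auto simp: is_num_def num_def)

lemma cool_num[simp]: "cool (num s) t = num s"
  by (subst cool.simps) simp
lemma temp_num[simp]: "temp (num s) = 0" by (simp add: temp_def)

lemma cool_tilde_SG: "cool_tilde (SG (Inl xs) (Inl ys)) s =
   SG (Inl (map (\<lambda>g. shift (- s) (cool g s)) xs)) (Inl (map (\<lambda>g. shift s (cool g s)) ys))"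
  by (simp add: cool_tilde_def)

lemma temp_SG: "temp (SG (Inl xs) (Inl ys)) = (LEAST s. 0 \<le> s \<and> Ls (cool_tilde (SG (Inl xs) (Inl ys)) s) = Rs (cool_tilde (SG (Inl xs) (Inl ys)) s))"
  by (simp add: temp_def)

definition cmono :: "sg \<Rightarrow> bool" where
  "cmono g \<longleftrightarrow> (\<forall>s s'. 0 \<le> s \<longrightarrow> s \<le> s' \<longrightarrow> Ls (cool g s') \<le> Ls (cool g s) \<and> Ls (cool g s) \<le> Ls (cool g s') + (s' - s)
       \<and> Rs (cool g s) \<le> Rs (cool g s') \<and> Rs (cool g s') \<le> Rs (cool g s) + (s' - s))"

definition cbasic :: "sg \<Rightarrow> bool" where
  "cbasic g \<longleftrightarrow> (\<forall>s\<ge>0. good (cool g s)) \<and> cmono g \<and> Ls (cool g 0) = Ls g \<and> Rs (cool g 0) = Rs g"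

lemma lip_isCont:
  fixes f :: "real \<Rightarrow> real"
  assumes "\<And>x y. \<bar>f x - f y\<bar> \<le> C * \<bar>x - y\<bar>" "C \<ge> 0"
  shows "isCont f x"
  unfolding isCont_def LIM_eq
proof (intro allI impI)
  fix r :: real assume r: "r > 0"
  show "\<exists>s>0. \<forall>y. y \<noteq> x \<and> norm (y - x) < s \<longrightarrow> norm (f y - f x) < r"
  proof (intro exI[of _ "r / (C + 1)"] conjI allI impI)
    show "r / (C + 1) > 0" using r assms(2) by simp
    fix y assume y: "y \<noteq> x \<and> norm (y - x) < r / (C + 1)"
    have "\<bar>f y - f x\<bar> \<le> C * \<bar>y - x\<bar>" by (rule assms(1))
    also have "\<dots> \<le> (C + 1) * \<bar>y - x\<bar>" by (simp add: mult_right_mono)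
    also have "\<dots> < (C + 1) * (r / (C + 1))"
      using y assms(2) by (intro mult_strict_left_mono) auto
    also have "\<dots> = r" using assms(2) by simp
    finally show "norm (f y - f x) < r" by simp
  qed
qed

context
  fixes xs ys :: "sg list" and X :: sg
  assumes X: "X = SG (Inl xs) (Inl ys)" and ne: "xs \<noteq> []" "ys \<noteq> []"
    and opts: "\<forall>g\<in>set xs \<union> set ys. good g \<and> cbasic g"
begin

lemma goodc: "g \<in> set xs \<union> set ys \<Longrightarrow> 0 \<le> s \<Longrightarrow> good (cool g s)"
  using opts by (auto simp: cbasic_def)

lemma le_TL: "0 \<le> s \<Longrightarrow> c \<le> Ls (cool_tilde X s) \<longleftrightarrow> (\<exists>g\<in>set xs. c \<le> Rs (cool g s) - s)"
  unfolding X cool_tilde_SG using ne goodc by (subst le_Ls_iff) (auto simp: Rs_shift)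
lemma TL_le: "0 \<le> s \<Longrightarrow> Ls (cool_tilde X s) \<le> c \<longleftrightarrow> (\<forall>g\<in>set xs. Rs (cool g s) - s \<le> c)"
  unfolding X cool_tilde_SG using ne goodc by (subst Ls_le_iff) (auto simp: Rs_shift)
lemma le_TR: "0 \<le> s \<Longrightarrow> c \<le> Rs (cool_tilde X s) \<longleftrightarrow> (\<forall>g\<in>set ys. c \<le> Ls (cool g s) + s)"
  unfolding X cool_tilde_SG using ne goodc by (subst le_Rs_iff) (auto simp: Ls_shift)
lemma TR_le: "0 \<le> s \<Longrightarrow> Rs (cool_tilde X s) \<le> c \<longleftrightarrow> (\<exists>g\<in>set ys. Ls (cool g s) + s \<le> c)"
  unfolding X cool_tilde_SG using ne goodc by (subst Rs_le_iff) (auto simp: Ls_shift)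

lemma tilde_mono:
  assumes "0 \<le> s" "s \<le> s'"
  shows "Ls (cool_tilde X s') \<le> Ls (cool_tilde X s) \<and> Ls (cool_tilde X s) \<le> Ls (cool_tilde X s') + (s' - s)
       \<and> Rs (cool_tilde X s) \<le> Rs (cool_tilde X s') \<and> Rs (cool_tilde X s') \<le> Rs (cool_tilde X s) + (s' - s)"
proof -
  have s': "0 \<le> s'" using assms by simp
  have m: "cmono g" if "g \<in> set xs \<union> set ys" for g using opts that by (auto simp: cbasic_def)
  have 1: "Ls (cool_tilde X s') \<le> Ls (cool_tilde X s)"
    unfolding TL_le[OF s']
  proof
    fix g assume g: "g \<in> set xs"
    have "Rs (cool g s') \<le> Rs (cool g s) + (s' - s)" using m[of g] g assms unfolding cmono_def by auto
    moreover have "Rs (cool g s) - s \<le> Ls (cool_tilde X s)"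
      using TL_le[OF assms(1), of "Ls (cool_tilde X s)"] g by auto
    ultimately show "Rs (cool g s') - s' \<le> Ls (cool_tilde X s)" by simp
  qed
  have 2: "Ls (cool_tilde X s) \<le> Ls (cool_tilde X s') + (s' - s)"
  proof -
    obtain g where g: "g \<in> set xs" "Ls (cool_tilde X s) \<le> Rs (cool g s) - s"
      using le_TL[OF assms(1), of "Ls (cool_tilde X s)"] by auto
    have "Rs (cool g s) \<le> Rs (cool g s')" using m[of g] g assms unfolding cmono_def by auto
    moreover have "Rs (cool g s') - s' \<le> Ls (cool_tilde X s')"
      using TL_le[OF s', of "Ls (cool_tilde X s')"] g by auto
    ultimately show ?thesis using g by simp
  qed
  have 3: "Rs (cool_tilde X s) \<le> Rs (cool_tilde X s')"
    unfolding le_TR[OF s']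
  proof
    fix g assume g: "g \<in> set ys"
    have "Ls (cool g s) \<le> Ls (cool g s') + (s' - s)" using m[of g] g assms unfolding cmono_def by auto
    moreover have "Rs (cool_tilde X s) \<le> Ls (cool g s) + s"
      using le_TR[OF assms(1), of "Rs (cool_tilde X s)"] g by auto
    ultimately show "Rs (cool_tilde X s) \<le> Ls (cool g s') + s'" by simp
  qed
  have 4: "Rs (cool_tilde X s') \<le> Rs (cool_tilde X s) + (s' - s)"
  proof -
    obtain g where g: "g \<in> set ys" "Ls (cool g s) + s \<le> Rs (cool_tilde X s)"
      using TR_le[OF assms(1), of "Rs (cool_tilde X s)"] by auto
    have "Ls (cool g s') \<le> Ls (cool g s)" using m[of g] g assms unfolding cmono_def by auto
    moreover have "Rs (cool_tilde X s') \<le> Ls (cool g s') + s'"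
      using le_TR[OF s', of "Rs (cool_tilde X s')"] g by auto
    ultimately show ?thesis using g by simp
  qed
  show ?thesis using 1 2 3 4 by simp
qed

lemma tilde_0: "Ls (cool_tilde X 0) = Ls X \<and> Rs (cool_tilde X 0) = Rs X"
proof -
  have z: "Ls (cool g 0) = Ls g \<and> Rs (cool g 0) = Rs g" if "g \<in> set xs \<union> set ys" for g
    using opts that by (auto simp: cbasic_def)
  have "Ls (cool_tilde X 0) = Ls X"
  proof (rule antisym)
    show "Ls (cool_tilde X 0) \<le> Ls X" unfolding TL_le[OF order_refl]
      using z X ne Ls_le_iff[of xs "Inl ys" "Ls X"] by auto
    show "Ls X \<le> Ls (cool_tilde X 0)" unfolding le_TL[OF order_refl]
      using z X ne le_Ls_iff[of xs "Ls X" "Inl ys"] by auto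
  qed
  moreover have "Rs (cool_tilde X 0) = Rs X"
  proof (rule antisym)
    show "Rs X \<le> Rs (cool_tilde X 0)" unfolding le_TR[OF order_refl]
      using z X ne le_Rs_iff[of ys "Rs X" "Inl xs"] by auto
    show "Rs (cool_tilde X 0) \<le> Rs X" unfolding TR_le[OF order_refl]
      using z X ne Rs_le_iff[of ys "Inl xs" "Rs X"] by auto
  qed
  ultimately show ?thesis by simp
qed

lemma temp_props:
  assumes nz: "Rs X \<le> Ls X"
  shows "0 \<le> temp X \<and> Ls (cool_tilde X (temp X)) = Rs (cool_tilde X (temp X))
     \<and> (\<forall>s. 0 \<le> s \<longrightarrow> s < temp X \<longrightarrow> Rs (cool_tilde X s) < Ls (cool_tilde X s))
     \<and> (\<forall>s. temp X \<le> s \<longrightarrow> Ls (cool_tilde X s) \<le> Rs (cool_tilde X s))"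
proof -
  define D where "D s = Ls (cool_tilde X s) - Rs (cool_tilde X s)" for s
  have Dmono: "D s' \<le> D s" if "0 \<le> s" "s \<le> s'" for s s'
    using tilde_mono[OF that] unfolding D_def by linarith
  have Dlip0: "\<bar>D s - D s'\<bar> \<le> 2 * \<bar>s - s'\<bar>" if "0 \<le> s" "s \<le> s'" for s s'
    using tilde_mono[OF that] unfolding D_def by (simp add: abs_if)
  have Dlip: "\<bar>D s - D s'\<bar> \<le> 2 * \<bar>s - s'\<bar>" if "0 \<le> s" "0 \<le> s'" for s s'
  proof (cases "s \<le> s'")
    case True then show ?thesis using Dlip0 that by blast
  next
    case False then show ?thesis using Dlip0[of s' s] that by (simp add: abs_minus_commute)
  qed
  define D' where "D' x = D (max x 0)" for x
  have cont: "isCont D' x" for x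
  proof (rule lip_isCont[of _ 2])
    fix x y :: real
    have "\<bar>D' x - D' y\<bar> \<le> 2 * \<bar>max x 0 - max y 0\<bar>" unfolding D'_def by (rule Dlip) auto
    also have "\<dots> \<le> 2 * \<bar>x - y\<bar>" by (simp add: abs_if max_def)
    finally show "\<bar>D' x - D' y\<bar> \<le> 2 * \<bar>x - y\<bar>" .
  qed simp
  define M where "M = Max (Ls ` set xs)"
  define m where "m = Min (Rs ` set ys)"
  define b where "b = \<bar>M - m\<bar>"
  have b0: "0 \<le> b" unfolding b_def by simp
  have cb: "cbasic g" "good g" if "g \<in> set xs \<union> set ys" for g using opts that by auto
  have "Ls (cool_tilde X b) \<le> M - b"
    unfolding TL_le[OF b0]
  proof
    fix g assume g: "g \<in> set xs"
    have "Rs (cool g b) \<le> Ls (cool g b)" using good_RsLs goodc g b0 by blast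
    also have "\<dots> \<le> Ls (cool g 0)" using cb[of g] g b0 unfolding cbasic_def cmono_def by auto
    also have "\<dots> = Ls g" using cb[of g] g unfolding cbasic_def by auto
    also have "\<dots> \<le> M" unfolding M_def using g by (intro Max_ge) auto
    finally show "Rs (cool g b) - b \<le> M - b" by simp
  qed
  moreover have "m + b \<le> Rs (cool_tilde X b)"
    unfolding le_TR[OF b0]
  proof
    fix g assume g: "g \<in> set ys"
    have "m \<le> Rs g" unfolding m_def using g by (intro Min_le) auto
    also have "\<dots> = Rs (cool g 0)" using cb[of g] g unfolding cbasic_def by auto
    also have "\<dots> \<le> Rs (cool g b)" using cb[of g] g b0 unfolding cbasic_def cmono_def by auto
    also have "\<dots> \<le> Ls (cool g b)" using good_RsLs goodc g b0 by blast
    finally show "m + b \<le> Ls (cool g b) + b" by simp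
  qed
  ultimately have "D b \<le> M - m - 2 * b" unfolding D_def by simp
  moreover have "M - m - 2 * b \<le> 0" unfolding b_def by (simp add: abs_if)
  ultimately have Db: "D' b \<le> 0" unfolding D'_def using b0 by (simp add: max_def)
  have D0: "0 \<le> D' 0" unfolding D'_def D_def using tilde_0 nz by simp
  obtain z where z: "0 \<le> z" "z \<le> b" "D' z = 0"
    using IVT2[of D' b 0 0] Db D0 b0 cont by auto
  define Z where "Z = {s. 0 \<le> s \<and> Ls (cool_tilde X s) = Rs (cool_tilde X s)}"
  have zZ: "z \<in> Z" using z unfolding Z_def D'_def D_def by auto
  have bdd: "bdd_below Z" unfolding Z_def by (rule bdd_belowI[of _ 0]) auto
  define t0 where "t0 = Inf Z"
  have t00: "0 \<le> t0" unfolding t0_def using zZ by (intro cInf_greatest) (auto simp: Z_def)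
  have lower: "t0 \<le> y" if "y \<in> Z" for y unfolding t0_def using cInf_lower[OF that bdd] .
  have Dt0: "D t0 = 0"
  proof (rule ccontr)
    assume ne0: "D t0 \<noteq> 0"
    define d where "d = \<bar>D t0\<bar> / 4"
    have d: "d > 0" using ne0 unfolding d_def by simp
    have "Inf Z < t0 + d" using d unfolding t0_def by simp
    then obtain y where y: "y \<in> Z" "y < t0 + d" using cInf_less_iff[of Z] zZ bdd by auto
    have "t0 \<le> y" using lower y by simp
    have Dy: "D y = 0" using y unfolding Z_def D_def by auto
    have "\<bar>D t0 - D y\<bar> \<le> 2 * \<bar>t0 - y\<bar>" using Dlip[of t0 y] t00 \<open>t0 \<le> y\<close> by simp
    then have "\<bar>D t0\<bar> \<le> 2 * d" using Dy \<open>t0 \<le> y\<close> y by simp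
    then show False using d unfolding d_def by simp
  qed
  have t0Z: "t0 \<in> Z" using Dt0 t00 unfolding Z_def D_def by auto
  have temp_eq: "temp X = t0"
    unfolding X temp_SG
    by (rule Least_equality) (use t0Z lower in \<open>auto simp: Z_def X\<close>)
  have "Rs (cool_tilde X s) < Ls (cool_tilde X s)" if "0 \<le> s" "s < t0" for s
  proof -
    have "D t0 \<le> D s" using Dmono that by simp
    moreover have "D s \<noteq> 0" using lower[of s] that unfolding Z_def D_def by auto
    ultimately show ?thesis using Dt0 unfolding D_def by simp
  qed
  moreover have "Ls (cool_tilde X s) \<le> Rs (cool_tilde X s)" if "t0 \<le> s" for s
    using Dmono[of t0 s] that t00 Dt0 unfolding D_def by simp
  ultimately show ?thesis using temp_eq t00 t0Z unfolding Z_def by auto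
qed

end

definition cprops :: "sg \<Rightarrow> bool" where
  "cprops g \<longleftrightarrow> cbasic g \<and> 0 \<le> temp g
     \<and> (\<forall>t\<ge>temp g. Ls (cool g t) = Ls (cool g (temp g)) \<and> Rs (cool g t) = Ls (cool g (temp g)))
     \<and> (\<forall>t>temp g. cool g t = num (Ls (cool g (temp g))))"

lemma cprops_all: "good X \<Longrightarrow> cprops X"
proof (induction rule: good_induct)
  case (num s)
  then show ?case by (simp add: cprops_def cbasic_def cmono_def)
next
  case (SG xs ys)
  define X where "X = SG (Inl xs) (Inl ys)"
  have opts: "\<forall>g\<in>set xs \<union> set ys. good g \<and> cbasic g" using SG by (auto simp: cprops_def)
  note ctx = X_def SG(1,2) opts
  have nz: "Rs X \<le> Ls X" using SG(3) X_def by simp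
  note tp = temp_props[OF ctx nz]
  define T where "T = temp X"
  have T0: "0 \<le> T" using tp T_def by simp
  have ceq: "cool X t = (if t \<le> T then cool_tilde X t else num (Ls (cool_tilde X T)))" for t
    unfolding T_def X_def by (rule cool_eq) simp
  have eqT: "Ls (cool_tilde X T) = Rs (cool_tilde X T)" using tp T_def by simp
  have stops: "Ls (cool X t) = Ls (cool_tilde X (min t T)) \<and> Rs (cool X t) = Rs (cool_tilde X (min t T))" for t
    using eqT by (simp add: ceq min_def)
  have good_ct: "good (cool_tilde X t)" if "0 \<le> t" "t \<le> T" for t
  proof -
    have "Rs (cool_tilde X t) \<le> Ls (cool_tilde X t)"
    proof (cases "t < T")
      case True then show ?thesis using tp that T_def by auto
    next
      case False then show ?thesis using eqT that by (simp add: antisym)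
    qed
    moreover have "\<forall>g\<in>set (map (\<lambda>g. shift (- t) (cool g t)) xs). good g"
      using goodc[OF ctx] that by (auto intro!: good_shift)
    moreover have "\<forall>g\<in>set (map (\<lambda>g. shift t (cool g t)) ys). good g"
      using goodc[OF ctx] that by (auto intro!: good_shift)
    ultimately show ?thesis unfolding X_def cool_tilde_SG
      by (intro good_SG) (use SG(1,2) in auto)
  qed
  have good_c: "good (cool X t)" if "0 \<le> t" for t
    using good_ct[OF that] by (simp add: ceq)
  have mono: "cmono X"
    unfolding cmono_def
  proof (intro allI impI)
    fix s s' :: real assume a: "0 \<le> s" "s \<le> s'"
    have "0 \<le> min s T" "min s T \<le> min s' T" using a T0 by auto
    note tm = tilde_mono[OF ctx this]
    have "min s' T - min s T \<le> s' - s" using a by (simp add: min_def)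
    then show "Ls (cool X s') \<le> Ls (cool X s) \<and> Ls (cool X s) \<le> Ls (cool X s') + (s' - s)
       \<and> Rs (cool X s) \<le> Rs (cool X s') \<and> Rs (cool X s') \<le> Rs (cool X s) + (s' - s)"
      using tm stops[of s] stops[of s'] by linarith
  qed
  have zero: "Ls (cool X 0) = Ls X \<and> Rs (cool X 0) = Rs X"
    using stops[of 0] tilde_0[OF ctx] T0 by (simp add: min_def)
  have late: "Ls (cool X t) = Ls (cool X T) \<and> Rs (cool X t) = Ls (cool X T)" if "T \<le> t" for t
    using stops[of t] stops[of T] that eqT by (simp add: min_def)
  have late2: "cool X t = num (Ls (cool X T))" if "T < t" for t
    using that by (simp add: ceq)
  have "cprops X" unfolding cprops_def cbasic_def T_def[symmetric]
    using good_c mono zero late late2 T0 by blast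
  then show ?case by (simp add: X_def)
qed

lemma good_cool: "good X \<Longrightarrow> 0 \<le> t \<Longrightarrow> good (cool X t)"
  using cprops_all by (auto simp: cprops_def cbasic_def)
lemma temp_nonneg: "good X \<Longrightarrow> 0 \<le> temp X"
  using cprops_all by (auto simp: cprops_def)




lemma good_SG_D: "good (SG (Inl xs) (Inl ys)) \<Longrightarrow> xs \<noteq> [] \<and> ys \<noteq> [] \<and> (\<forall>g\<in>set xs \<union> set ys. good g)"
  by (erule good_obtain) (auto simp: num_def)

lemma ctx_of: "good (SG (Inl xs) (Inl ys)) \<Longrightarrow> xs \<noteq> [] \<and> ys \<noteq> [] \<and> (\<forall>g\<in>set xs \<union> set ys. good g \<and> cbasic g)"
  using good_SG_D[of xs ys] cprops_all by (auto simp: cprops_def)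

lemma Ls_shift_SG: "zs \<noteq> [] \<Longrightarrow> \<forall>z\<in>set zs. good z \<Longrightarrow> Ls (SG (Inl (map (shift c) zs)) R) = Ls (SG (Inl zs) R') + c"
proof -
  assume a: "zs \<noteq> []" "\<forall>z\<in>set zs. good z"
  have "Ls (SG (Inl (map (shift c) zs)) R) = Max ((\<lambda>x. Rs x + c) ` set zs)"
    unfolding Ls_map using a by (intro arg_cong[where f=Max] image_cong) (auto simp: Rs_shift)
  also have "\<dots> = Ls (SG (Inl zs) R') + c" using a by (simp add: Max_add_commute Ls_Inl)
  finally show ?thesis .
qed

lemma Rs_shift_SG: "zs \<noteq> [] \<Longrightarrow> \<forall>z\<in>set zs. good z \<Longrightarrow> Rs (SG L (Inl (map (shift c) zs))) = Rs (SG L' (Inl zs)) + c"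
proof -
  assume a: "zs \<noteq> []" "\<forall>z\<in>set zs. good z"
  have "Rs (SG L (Inl (map (shift c) zs))) = Min ((\<lambda>x. Ls x + c) ` set zs)"
    unfolding Rs_map using a by (intro arg_cong[where f=Min] image_cong) (auto simp: Ls_shift)
  also have "\<dots> = Rs (SG L' (Inl zs)) + c" using a by (simp add: Min_add_commute Rs_Inl)
  finally show ?thesis .
qed

lemma cool_shift: "good H \<Longrightarrow> cool (shift c H) t = shift c (cool H t) \<and> temp (shift c H) = temp H"
proof (induction arbitrary: t rule: good_induct)
  case (num s) then show ?case by simp
next
  case (SG xs ys)
  define H where "H = SG (Inl xs) (Inl ys)"
  have SH: "shift c H = SG (Inl (map (shift c) xs)) (Inl (map (shift c) ys))" by (simp add: H_def)
  have IH: "cool (shift c g) s = shift c (cool g s)" if "g \<in> set xs \<union> set ys" for g s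
    using SG that by auto
  have ct: "cool_tilde (shift c H) s = shift c (cool_tilde H s)" for s
    unfolding SH by (simp add: cool_tilde_SG H_def IH shift_shift add.commute)
  have "good H" unfolding H_def using SG by (intro good_SG) auto
  then have ctx: "xs \<noteq> [] \<and> ys \<noteq> [] \<and> (\<forall>g\<in>set xs \<union> set ys. good g \<and> cbasic g)"
    unfolding H_def by (rule ctx_of)
  have gc: "good (shift (- s) (cool g s))" "good (shift s (cool g s))" if "g \<in> set xs \<union> set ys" "0 \<le> s" for g s
    using ctx that by (auto intro: good_shift good_cool)
  have stops: "Ls (cool_tilde (shift c H) s) = Ls (cool_tilde H s) + c \<and> Rs (cool_tilde (shift c H) s) = Rs (cool_tilde H s) + c"
    if "0 \<le> s" for s
  proof -
    have "\<forall>z\<in>set (map (\<lambda>g. shift (- s) (cool g s)) xs). good z" "\<forall>z\<in>set (map (\<lambda>g. shift s (cool g s)) ys). good z"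
      using gc[OF _ that] by auto
    then show ?thesis
      unfolding ct unfolding H_def cool_tilde_SG shift_SG
      using ctx by (intro conjI Ls_shift_SG Rs_shift_SG) auto
  qed
  have temp: "temp (shift c H) = temp H"
  proof -
    have 1: "temp (shift c H) = (LEAST s. 0 \<le> s \<and> Ls (cool_tilde (shift c H) s) = Rs (cool_tilde (shift c H) s))"
      unfolding SH by (rule temp_SG)
    have 2: "temp H = (LEAST s. 0 \<le> s \<and> Ls (cool_tilde H s) = Rs (cool_tilde H s))"
      unfolding H_def by (rule temp_SG)
    show ?thesis unfolding 1 2
      by (rule arg_cong[where f=Least]) (use stops in auto)
  qed
  have gH: "good H" unfolding H_def using SG by (intro good_SG) auto
  have LT: "Ls (shift c (cool_tilde H (temp H))) = Ls (cool_tilde H (temp H)) + c"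
    using stops[OF temp_nonneg[OF gH]] ct[of "temp H"] by simp
  have "cool (shift c H) t = shift c (cool H t)"
    unfolding cool_eq[of "shift c H", OF not_num_SG[of "map (shift c) xs" "map (shift c) ys", folded SH]]
      cool_eq[of H, OF not_num_SG[of xs ys, folded H_def]] temp ct
    using LT by simp
  then show ?case using temp unfolding H_def by (rule conjI)
qed

lemma sum_eq: "good X \<Longrightarrow> good Y \<Longrightarrow> Ls X = Rs X \<Longrightarrow> Ls Y = Rs Y \<Longrightarrow>
   Ls (gsum X Y) = Ls X + Ls Y \<and> Rs (gsum X Y) = Ls X + Ls Y"
proof -
  assume a: "good X" "good Y" "Ls X = Rs X" "Ls Y = Rs Y"
  then have "sumP X Y" by (intro sumP_all)
  then show ?thesis unfolding sumP_def using a(3,4) by linarith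
qed

definition CL :: "sg \<Rightarrow> sg \<Rightarrow> bool" where
  "CL X Y \<longleftrightarrow> (\<forall>s\<ge>0. Ls (cool (gsum X Y) s) = Ls (gsum (cool X s) (cool Y s))
                   \<and> Rs (cool (gsum X Y) s) = Rs (gsum (cool X s) (cool Y s)))"

lemma cprops_facts:
  assumes "good X"
  shows "0 \<le> temp X" "\<And>t. temp X \<le> t \<Longrightarrow> Ls (cool X t) = Ls (cool X (temp X)) \<and> Rs (cool X t) = Ls (cool X (temp X))"
    "\<And>t. temp X < t \<Longrightarrow> cool X t = num (Ls (cool X (temp X)))"
    "cmono X"
  using cprops_all[OF assms] unfolding cprops_def cbasic_def by blast+




lemma bex_img: "(\<exists>x\<in>f ` A. P x) \<longleftrightarrow> (\<exists>y\<in>A. P (f y))" by auto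
lemma ball_img: "(\<forall>x\<in>f ` A. P x) \<longleftrightarrow> (\<forall>y\<in>A. P (f y))" by auto


lemma V_iff:
  assumes X: "X = SG (Inl (map (\<lambda>g. shift (-s) (cool g s)) xs)) (Inl (map (\<lambda>g. shift s (cool g s)) ys))"
    and Y: "Y = SG (Inl (map (\<lambda>h. shift (-s) (cool h s)) us)) (Inl (map (\<lambda>h. shift s (cool h s)) vs))"
    and ne: "xs \<noteq> []" "ys \<noteq> []" "us \<noteq> []" "vs \<noteq> []"
    and gx: "\<forall>g\<in>set xs \<union> set ys. good g" and gy: "\<forall>h\<in>set us \<union> set vs. good h"
    and s: "0 \<le> s" and gX: "good X" and gY: "good Y"
  shows "c \<le> Ls (gsum X Y) \<longleftrightarrow> (\<exists>g\<in>set xs. c \<le> Rs (gsum (cool g s) Y) - s) \<or> (\<exists>h\<in>set us. c \<le> Rs (gsum X (cool h s)) - s)"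
    and "c \<le> Rs (gsum X Y) \<longleftrightarrow> (\<forall>g\<in>set ys. c \<le> Ls (gsum (cool g s) Y) + s) \<and> (\<forall>h\<in>set vs. c \<le> Ls (gsum X (cool h s)) + s)"
proof -
  have e: "gsum X Y = SG (Inl (map (\<lambda>x. gsum x Y) (map (\<lambda>g. shift (-s) (cool g s)) xs) @ map (\<lambda>y. gsum X y) (map (\<lambda>h. shift (-s) (cool h s)) us)))
      (Inl (map (\<lambda>x. gsum x Y) (map (\<lambda>g. shift s (cool g s)) ys) @ map (\<lambda>y. gsum X y) (map (\<lambda>h. shift s (cool h s)) vs)))"
    unfolding X Y by (rule gsum_SG) (use ne in auto)
  have gc: "good (cool g s)" if "g \<in> set xs \<union> set ys" for g using gx that s good_cool by blast
  have hc: "good (cool h s)" if "h \<in> set us \<union> set vs" for h using gy that s good_cool by blast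
  have l1: "Rs (gsum (shift (-s) (cool g s)) Y) = Rs (gsum (cool g s) Y) - s" if "g \<in> set xs" for g
    using gc[of g] that gY by (simp add: gsum_shift_left Rs_shift good_gsum)
  have l2: "Rs (gsum X (shift (-s) (cool h s))) = Rs (gsum X (cool h s)) - s" if "h \<in> set us" for h
    using hc[of h] that gX by (simp add: gsum_shift_right Rs_shift good_gsum)
  have r1: "Ls (gsum (shift s (cool g s)) Y) = Ls (gsum (cool g s) Y) + s" if "g \<in> set ys" for g
    using gc[of g] that gY by (simp add: gsum_shift_left Ls_shift good_gsum)
  have r2: "Ls (gsum X (shift s (cool h s))) = Ls (gsum X (cool h s)) + s" if "h \<in> set vs" for h
    using hc[of h] that gX by (simp add: gsum_shift_right Ls_shift good_gsum)
  show "c \<le> Ls (gsum X Y) \<longleftrightarrow> (\<exists>g\<in>set xs. c \<le> Rs (gsum (cool g s) Y) - s) \<or> (\<exists>h\<in>set us. c \<le> Rs (gsum X (cool h s)) - s)"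
    unfolding e using ne l1 l2 by (subst le_Ls_iff) (auto simp: bex_Un bex_img)
  show "c \<le> Rs (gsum X Y) \<longleftrightarrow> (\<forall>g\<in>set ys. c \<le> Ls (gsum (cool g s) Y) + s) \<and> (\<forall>h\<in>set vs. c \<le> Ls (gsum X (cool h s)) + s)"
    unfolding e using ne r1 r2 by (subst le_Rs_iff) (auto simp: ball_Un ball_img)
qed

lemma sum_ineqs: assumes "good X" "good Y"
  shows "Ls X + Rs Y \<le> Ls (gsum X Y)" "Rs X + Ls Y \<le> Ls (gsum X Y)" "Rs X + Rs Y \<le> Rs (gsum X Y)"
    "Rs (gsum X Y) \<le> Rs X + Ls Y" "Rs (gsum X Y) \<le> Ls X + Rs Y" "Ls (gsum X Y) \<le> Ls X + Ls Y"
  using sumP_all[OF assms] unfolding sumP_def by auto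

lemma cmonoD: assumes "cmono g" "0 \<le> s" "s \<le> s'"
  shows "Ls (cool g s') \<le> Ls (cool g s)" "Ls (cool g s) \<le> Ls (cool g s') + (s' - s)"
    "Rs (cool g s) \<le> Rs (cool g s')" "Rs (cool g s') \<le> Rs (cool g s) + (s' - s)"
  using assms unfolding cmono_def by blast+

lemma eq_by_le: "(\<And>c::real. c \<le> x \<longleftrightarrow> c \<le> y) \<Longrightarrow> x = y"
  by (meson antisym order_refl)

context
  fixes xs ys us vs :: "sg list" and G H :: sg
  assumes G: "G = SG (Inl xs) (Inl ys)" and H: "H = SG (Inl us) (Inl vs)"
    and gG: "good G" and gH: "good H"
    and CLx: "\<forall>g\<in>set xs \<union> set ys. CL g H" and CLy: "\<forall>h\<in>set us \<union> set vs. CL G h"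
begin

lemma cG: "xs \<noteq> []" "ys \<noteq> []" "\<forall>g\<in>set xs \<union> set ys. good g \<and> cbasic g"
  using gG G ctx_of by auto
lemma cH: "us \<noteq> []" "vs \<noteq> []" "\<forall>g\<in>set us \<union> set vs. good g \<and> cbasic g"
  using gH H ctx_of by auto

definition "kxs = map (\<lambda>g. gsum g H) xs @ map (\<lambda>h. gsum G h) us"
definition "kys = map (\<lambda>g. gsum g H) ys @ map (\<lambda>h. gsum G h) vs"

lemma K_SG: "gsum G H = SG (Inl kxs) (Inl kys)"
  unfolding kxs_def kys_def unfolding G H by (rule gsum_SG) (use cG in auto)

lemma cK: "kxs \<noteq> []" "kys \<noteq> []" "\<forall>k\<in>set kxs \<union> set kys. good k \<and> cbasic k"
proof -
  show "kxs \<noteq> []" "kys \<noteq> []" unfolding kxs_def kys_def using cG by auto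
  have "good k" if "k \<in> set kxs \<union> set kys" for k
    using that cG cH gG gH unfolding kxs_def kys_def by (auto intro: good_gsum)
  then show "\<forall>k\<in>set kxs \<union> set kys. good k \<and> cbasic k"
    using cprops_all by (auto simp: cprops_def)
qed

lemma gK: "good (gsum G H)" using gG gH by (rule good_gsum)

lemma CLg: "g \<in> set xs \<union> set ys \<Longrightarrow> 0 \<le> s \<Longrightarrow>
   Ls (cool (gsum g H) s) = Ls (gsum (cool g s) (cool H s)) \<and> Rs (cool (gsum g H) s) = Rs (gsum (cool g s) (cool H s))"
  using CLx unfolding CL_def by blast
lemma CLh: "h \<in> set us \<union> set vs \<Longrightarrow> 0 \<le> s \<Longrightarrow>
   Ls (cool (gsum G h) s) = Ls (gsum (cool G s) (cool h s)) \<and> Rs (cool (gsum G h) s) = Rs (gsum (cool G s) (cool h s))"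
  using CLy unfolding CL_def by blast

lemmas ctxK = K_SG cK(1) cK(2) cK(3)
lemmas ctxG = G cG(1) cG(2) cG(3)
lemmas ctxH = H cH(1) cH(2) cH(3)

lemma A_le: "0 \<le> s \<Longrightarrow> Ls (cool_tilde (gsum G H) s) \<le> c \<longleftrightarrow>
   (\<forall>g\<in>set xs. Rs (gsum (cool g s) (cool H s)) - s \<le> c) \<and> (\<forall>h\<in>set us. Rs (gsum (cool G s) (cool h s)) - s \<le> c)"
  unfolding TL_le[OF ctxK] kxs_def using CLg CLh by (auto simp: bex_Un bex_img ball_Un ball_img)
lemma le_A: "0 \<le> s \<Longrightarrow> c \<le> Ls (cool_tilde (gsum G H) s) \<longleftrightarrow>
   (\<exists>g\<in>set xs. c \<le> Rs (gsum (cool g s) (cool H s)) - s) \<or> (\<exists>h\<in>set us. c \<le> Rs (gsum (cool G s) (cool h s)) - s)"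
  unfolding le_TL[OF ctxK] kxs_def using CLg CLh by (auto simp: bex_Un bex_img ball_Un ball_img)
lemma le_B: "0 \<le> s \<Longrightarrow> c \<le> Rs (cool_tilde (gsum G H) s) \<longleftrightarrow>
   (\<forall>g\<in>set ys. c \<le> Ls (gsum (cool g s) (cool H s)) + s) \<and> (\<forall>h\<in>set vs. c \<le> Ls (gsum (cool G s) (cool h s)) + s)"
  unfolding le_TR[OF ctxK] kys_def using CLg CLh by (auto simp: bex_Un bex_img ball_Un ball_img)
lemma B_le: "0 \<le> s \<Longrightarrow> Rs (cool_tilde (gsum G H) s) \<le> c \<longleftrightarrow>
   (\<exists>g\<in>set ys. Ls (gsum (cool g s) (cool H s)) + s \<le> c) \<or> (\<exists>h\<in>set vs. Ls (gsum (cool G s) (cool h s)) + s \<le> c)"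
  unfolding TR_le[OF ctxK] kys_def using CLg CLh by (auto simp: bex_Un bex_img ball_Un ball_img)

lemma nzG: "Rs G \<le> Ls G" using gG by (rule good_RsLs)
lemma nzH: "Rs H \<le> Ls H" using gH by (rule good_RsLs)
lemmas tpG = temp_props[OF ctxG nzG]
lemmas tpH = temp_props[OF ctxH nzH]

lemma Gf: "0 \<le> temp G" "\<And>t. temp G \<le> t \<Longrightarrow> Ls (cool G t) = Ls (cool G (temp G)) \<and> Rs (cool G t) = Ls (cool G (temp G))"
    "\<And>t. temp G < t \<Longrightarrow> cool G t = num (Ls (cool G (temp G)))"
    "\<And>t. t \<le> temp G \<Longrightarrow> cool G t = cool_tilde G t"
proof -
  show "0 \<le> temp G" "\<And>t. temp G \<le> t \<Longrightarrow> Ls (cool G t) = Ls (cool G (temp G)) \<and> Rs (cool G t) = Ls (cool G (temp G))"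
    "\<And>t. temp G < t \<Longrightarrow> cool G t = num (Ls (cool G (temp G)))"
    using cprops_facts[OF gG] by blast+
  have nn: "\<not> is_num G" unfolding G by simp
  show "\<And>t. t \<le> temp G \<Longrightarrow> cool G t = cool_tilde G t"
    using cool_eq[OF nn] by simp
qed
lemma Hf: "0 \<le> temp H" "\<And>t. temp H \<le> t \<Longrightarrow> Ls (cool H t) = Ls (cool H (temp H)) \<and> Rs (cool H t) = Ls (cool H (temp H))"
    "\<And>t. temp H < t \<Longrightarrow> cool H t = num (Ls (cool H (temp H)))"
    "\<And>t. t \<le> temp H \<Longrightarrow> cool H t = cool_tilde H t"
proof -
  show "0 \<le> temp H" "\<And>t. temp H \<le> t \<Longrightarrow> Ls (cool H t) = Ls (cool H (temp H)) \<and> Rs (cool H t) = Ls (cool H (temp H))"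
    "\<And>t. temp H < t \<Longrightarrow> cool H t = num (Ls (cool H (temp H)))"
    using cprops_facts[OF gH] by blast+
  have nn: "\<not> is_num H" unfolding H by simp
  show "\<And>t. t \<le> temp H \<Longrightarrow> cool H t = cool_tilde H t"
    using cool_eq[OF nn] by simp
qed

lemma optmono: "g \<in> set xs \<union> set ys \<union> set us \<union> set vs \<Longrightarrow> cmono g"
  using cG(3) cH(3) by (auto simp: cbasic_def)
lemma optgood: "g \<in> set xs \<union> set ys \<union> set us \<union> set vs \<Longrightarrow> 0 \<le> s \<Longrightarrow> good (cool g s)"
  using cG(3) cH(3) by (auto simp: cbasic_def)

lemma S1:
  assumes s: "0 \<le> s" "s \<le> max (temp G) (temp H)"
  shows "Ls (cool_tilde (gsum G H) s) = Ls (gsum (cool G s) (cool H s)) \<and> Rs (cool_tilde (gsum G H) s) = Rs (gsum (cool G s) (cool H s))"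
proof -
  define a where "a = temp G"
  define b where "b = temp H"
  define ga where "ga = Ls (cool G a)"
  define hb where "hb = Ls (cool H b)"
  have a0: "0 \<le> a" and b0: "0 \<le> b" using Gf Hf a_def b_def by auto
  have gcG: "good (cool G s)" using gG s good_cool by blast
  have gcH: "good (cool H s)" using gH s good_cool by blast
  have gaT: "Ls (cool_tilde G a) = ga" "Rs (cool_tilde G a) = ga"
    using Gf(4)[of a] tpG unfolding ga_def a_def by auto
  have hbT: "Ls (cool_tilde H b) = hb" "Rs (cool_tilde H b) = hb"
    using Hf(4)[of b] tpH unfolding hb_def b_def by auto
  consider (c1) "s \<le> a" "s \<le> b" | (c2) "a < s" "s \<le> b" | (c3) "b < s" "s \<le> a"
    using s unfolding a_def b_def by linarith
  then show ?thesis
  proof cases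
    case c1
    have eG: "cool G s = SG (Inl (map (\<lambda>g. shift (-s) (cool g s)) xs)) (Inl (map (\<lambda>g. shift s (cool g s)) ys))"
      using Gf(4)[of s] c1 G by (simp add: a_def cool_tilde_SG)
    have eH: "cool H s = SG (Inl (map (\<lambda>h. shift (-s) (cool h s)) us)) (Inl (map (\<lambda>h. shift s (cool h s)) vs))"
      using Hf(4)[of s] c1 H by (simp add: b_def cool_tilde_SG)
    have gx: "\<forall>g\<in>set xs \<union> set ys. good g" and gy: "\<forall>g\<in>set us \<union> set vs. good g"
      using cG(3) cH(3) by auto
    note VI = V_iff[OF eG eH cG(1,2) cH(1,2) gx gy s(1) gcG gcH]
    have "Ls (cool_tilde (gsum G H) s) = Ls (gsum (cool G s) (cool H s))"
      by (rule eq_by_le) (simp only: le_A[OF s(1)] VI(1))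
    moreover have "Rs (cool_tilde (gsum G H) s) = Rs (gsum (cool G s) (cool H s))"
      by (rule eq_by_le) (simp only: le_B[OF s(1)] VI(2))
    ultimately show ?thesis ..
  next
    case c2
    have cGs: "cool G s = num ga" using Gf(3)[of s] c2 unfolding ga_def a_def by simp
    have cHs: "cool H s = cool_tilde H s" using Hf(4)[of s] c2 unfolding b_def by simp
    have V: "Ls (gsum (cool G s) (cool H s)) = Ls (cool H s) + ga"
      unfolding cGs using gcH by (simp add: gsum_num_left Ls_shift)
    have W: "Rs (gsum (cool G s) (cool H s)) = Rs (cool H s) + ga"
      unfolding cGs using gcH by (simp add: gsum_num_left Rs_shift)
    have hnum: "Ls (gsum (num ga) (cool h s)) = Ls (cool h s) + ga \<and> Rs (gsum (num ga) (cool h s)) = Rs (cool h s) + ga"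
      if "h \<in> set us \<union> set vs" for h
      using optgood[of h s] that s by (simp add: gsum_num_left Ls_shift Rs_shift)
    have "Ls (cool_tilde (gsum G H) s) \<le> Ls (cool H s) + ga"
      unfolding A_le[OF s(1)] cGs
    proof safe
      fix g assume g: "g \<in> set xs"
      have "Rs (gsum (cool g s) (cool H s)) \<le> Rs (cool g s) + Ls (cool H s)"
        using sum_ineqs(4)[OF optgood[of g s] gcH] g s by auto
      moreover have "Rs (cool g s) \<le> Rs (cool g a) + (s - a)"
        using cmonoD(4)[OF optmono[of g] a0] g c2 by auto
      moreover have "Rs (cool g a) - a \<le> ga"
        using TL_le[OF ctxG a0, of ga] gaT g by auto
      ultimately show "Rs (gsum (cool g s) (cool H s)) - s \<le> Ls (cool H s) + ga" by linarith
    next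
      fix h assume h: "h \<in> set us"
      have "Rs (cool h s) - s \<le> Ls (cool H s)"
        using TL_le[OF ctxH s(1), of "Ls (cool_tilde H s)"] h cHs by auto
      then show "Rs (gsum (num ga) (cool h s)) - s \<le> Ls (cool H s) + ga" using hnum[of h] h by auto
    qed
    moreover have "Ls (cool H s) + ga \<le> Ls (cool_tilde (gsum G H) s)"
    proof -
      obtain h where h: "h \<in> set us" "Ls (cool H s) \<le> Rs (cool h s) - s"
        using le_TL[OF ctxH s(1), of "Ls (cool_tilde H s)"] cHs by auto
      have "Ls (cool H s) + ga \<le> Rs (gsum (num ga) (cool h s)) - s" using h hnum[of h] by simp
      then show ?thesis unfolding le_A[OF s(1)] cGs using h(1) by blast
    qed
    moreover have "Rs (cool H s) + ga \<le> Rs (cool_tilde (gsum G H) s)"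
      unfolding le_B[OF s(1)] cGs
    proof safe
      fix g assume g: "g \<in> set ys"
      have "Ls (cool g s) + Rs (cool H s) \<le> Ls (gsum (cool g s) (cool H s))"
        using sum_ineqs(1)[OF optgood[of g s] gcH] g s by auto
      moreover have "Ls (cool g a) \<le> Ls (cool g s) + (s - a)"
        using cmonoD(2)[OF optmono[of g] a0] g c2 by auto
      moreover have "ga \<le> Ls (cool g a) + a"
        using le_TR[OF ctxG a0, of ga] gaT g by auto
      ultimately show "Rs (cool H s) + ga \<le> Ls (gsum (cool g s) (cool H s)) + s" by linarith
    next
      fix h assume h: "h \<in> set vs"
      have "Rs (cool H s) \<le> Ls (cool h s) + s"
        using le_TR[OF ctxH s(1), of "Rs (cool_tilde H s)"] h cHs by auto
      then show "Rs (cool H s) + ga \<le> Ls (gsum (num ga) (cool h s)) + s" using hnum[of h] h by auto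
    qed
    moreover have "Rs (cool_tilde (gsum G H) s) \<le> Rs (cool H s) + ga"
    proof -
      obtain h where h: "h \<in> set vs" "Ls (cool h s) + s \<le> Rs (cool H s)"
        using TR_le[OF ctxH s(1), of "Rs (cool_tilde H s)"] cHs by auto
      have "Ls (gsum (num ga) (cool h s)) + s \<le> Rs (cool H s) + ga" using h hnum[of h] by simp
      then show ?thesis unfolding B_le[OF s(1)] cGs using h(1) by blast
    qed
    ultimately show ?thesis unfolding V W by linarith
  next
    case c3
    have cHs: "cool H s = num hb" using Hf(3)[of s] c3 unfolding hb_def b_def by simp
    have cGs: "cool G s = cool_tilde G s" using Gf(4)[of s] c3 unfolding a_def by simp
    have V: "Ls (gsum (cool G s) (cool H s)) = Ls (cool G s) + hb"
      unfolding cHs using gcG by (simp add: gsum_num_right Ls_shift)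
    have W: "Rs (gsum (cool G s) (cool H s)) = Rs (cool G s) + hb"
      unfolding cHs using gcG by (simp add: gsum_num_right Rs_shift)
    have gnum: "Ls (gsum (cool g s) (num hb)) = Ls (cool g s) + hb \<and> Rs (gsum (cool g s) (num hb)) = Rs (cool g s) + hb"
      if "g \<in> set xs \<union> set ys" for g
    proof -
      have "good (cool g s)" using optgood[of g s] that s by auto
      then show ?thesis by (simp add: gsum_num_right Ls_shift Rs_shift)
    qed
    have "Ls (cool_tilde (gsum G H) s) \<le> Ls (cool G s) + hb"
      unfolding A_le[OF s(1)] cHs
    proof safe
      fix h assume h: "h \<in> set us"
      have "Rs (gsum (cool G s) (cool h s)) \<le> Ls (cool G s) + Rs (cool h s)"
        using sum_ineqs(5)[OF gcG optgood[of h s]] h s by auto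
      moreover have "Rs (cool h s) \<le> Rs (cool h b) + (s - b)"
        using cmonoD(4)[OF optmono[of h] b0] h c3 by auto
      moreover have "Rs (cool h b) - b \<le> hb"
        using TL_le[OF ctxH b0, of hb] hbT h by auto
      ultimately show "Rs (gsum (cool G s) (cool h s)) - s \<le> Ls (cool G s) + hb" by linarith
    next
      fix g assume g: "g \<in> set xs"
      have "Rs (cool g s) - s \<le> Ls (cool G s)"
        using TL_le[OF ctxG s(1), of "Ls (cool_tilde G s)"] g cGs by auto
      then show "Rs (gsum (cool g s) (num hb)) - s \<le> Ls (cool G s) + hb" using gnum[of g] g by auto
    qed
    moreover have "Ls (cool G s) + hb \<le> Ls (cool_tilde (gsum G H) s)"
    proof -
      obtain g where g: "g \<in> set xs" "Ls (cool G s) \<le> Rs (cool g s) - s"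
        using le_TL[OF ctxG s(1), of "Ls (cool_tilde G s)"] cGs by auto
      have "Ls (cool G s) + hb \<le> Rs (gsum (cool g s) (num hb)) - s" using g gnum[of g] by simp
      then show ?thesis unfolding le_A[OF s(1)] cHs using g(1) by blast
    qed
    moreover have "Rs (cool G s) + hb \<le> Rs (cool_tilde (gsum G H) s)"
      unfolding le_B[OF s(1)] cHs
    proof safe
      fix h assume h: "h \<in> set vs"
      have "Rs (cool G s) + Ls (cool h s) \<le> Ls (gsum (cool G s) (cool h s))"
        using sum_ineqs(2)[OF gcG optgood[of h s]] h s by auto
      moreover have "Ls (cool h b) \<le> Ls (cool h s) + (s - b)"
        using cmonoD(2)[OF optmono[of h] b0] h c3 by auto
      moreover have "hb \<le> Ls (cool h b) + b"
        using le_TR[OF ctxH b0, of hb] hbT h by auto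
      ultimately show "Rs (cool G s) + hb \<le> Ls (gsum (cool G s) (cool h s)) + s" by linarith
    next
      fix g assume g: "g \<in> set ys"
      have "Rs (cool G s) \<le> Ls (cool g s) + s"
        using le_TR[OF ctxG s(1), of "Rs (cool_tilde G s)"] g cGs by auto
      then show "Rs (cool G s) + hb \<le> Ls (gsum (cool g s) (num hb)) + s" using gnum[of g] g by auto
    qed
    moreover have "Rs (cool_tilde (gsum G H) s) \<le> Rs (cool G s) + hb"
    proof -
      obtain g where g: "g \<in> set ys" "Ls (cool g s) + s \<le> Rs (cool G s)"
        using TR_le[OF ctxG s(1), of "Rs (cool_tilde G s)"] cGs by auto
      have "Ls (gsum (cool g s) (num hb)) + s \<le> Rs (cool G s) + hb" using g gnum[of g] by simp
      then show ?thesis unfolding B_le[OF s(1)] cHs using g(1) by blast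
    qed
    ultimately show ?thesis unfolding V W by linarith
  qed
qed

lemma SG_main:
  shows "temp (gsum G H) \<le> max (temp G) (temp H)"
    and "CL G H"
    and "temp H < temp G \<Longrightarrow> temp (gsum G H) = temp G"
    and "Ls (cool (gsum G H) (temp (gsum G H))) = Ls (gsum (cool G (temp G)) (cool H (temp H)))"
    and "Rs (cool (gsum G H) (temp (gsum G H))) = Rs (gsum (cool G (temp G)) (cool H (temp H)))"
proof -
  define K where "K = gsum G H"
  have nzK: "Rs (gsum G H) \<le> Ls (gsum G H)" using gK by (rule good_RsLs)
  note tpK = temp_props[OF ctxK nzK]
  define T where "T = temp K"
  define a where "a = temp G"
  define b where "b = temp H"
  define ga where "ga = Ls (cool G a)"
  define hb where "hb = Ls (cool H b)"
  define m where "m = max a b"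
  have a0: "0 \<le> a" and b0: "0 \<le> b" using Gf Hf a_def b_def by auto
  have m0: "0 \<le> m" using a0 b0 m_def by simp
  have T0: "0 \<le> T" using tpK T_def K_def by simp
  have AT: "Ls (cool_tilde K T) = Rs (cool_tilde K T)" using tpK T_def K_def by simp
  have ceqK: "cool K t = (if t \<le> T then cool_tilde K t else num (Ls (cool_tilde K T)))" for t
    unfolding T_def K_def by (rule cool_eq) (simp add: K_SG)
  have S1': "Ls (cool_tilde K s) = Ls (gsum (cool G s) (cool H s)) \<and> Rs (cool_tilde K s) = Rs (gsum (cool G s) (cool H s))"
    if "0 \<le> s" "s \<le> m" for s
    using S1[OF that(1)] that(2) unfolding K_def m_def a_def b_def by blast
  have Vfroz: "Ls (gsum (cool G s) (cool H s)) = ga + hb \<and> Rs (gsum (cool G s) (cool H s)) = ga + hb"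
    if "m \<le> s" for s
  proof -
    have s0: "0 \<le> s" using that m0 by simp
    have "Ls (cool G s) = ga" "Rs (cool G s) = ga" using Gf(2)[of s] that unfolding ga_def a_def m_def by auto
    moreover have "Ls (cool H s) = hb" "Rs (cool H s) = hb" using Hf(2)[of s] that unfolding hb_def b_def m_def by auto
    ultimately show ?thesis using sum_eq[OF good_cool[OF gG s0] good_cool[OF gH s0]] by simp
  qed
  have Tm: "T \<le> m"
  proof (rule ccontr)
    assume "\<not> T \<le> m"
    then have "Rs (cool_tilde K m) < Ls (cool_tilde K m)" using tpK m0 unfolding T_def K_def by auto
    moreover have "Ls (cool_tilde K m) = ga + hb" "Rs (cool_tilde K m) = ga + hb"
      using S1'[OF m0 order_refl] Vfroz[OF order_refl] by auto
    ultimately show False by simp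
  qed
  have VA: "Ls (gsum (cool G s) (cool H s)) = Ls (cool_tilde K (min s m)) \<and> Rs (gsum (cool G s) (cool H s)) = Rs (cool_tilde K (min s m))"
    if "0 \<le> s" for s
  proof (cases "s \<le> m")
    case True then show ?thesis using S1'[OF that True] by simp
  next
    case False then show ?thesis using S1'[OF m0 order_refl] Vfroz[of s] Vfroz[of m] by simp
  qed
  have late: "Ls (gsum (cool G t) (cool H t)) = Ls (cool_tilde K T) \<and> Rs (gsum (cool G t) (cool H t)) = Ls (cool_tilde K T)"
    if "T < t" for t
  proof -
    have t0: "0 \<le> t" using that T0 by simp
    have "T \<le> min t m" using that Tm by simp
    note tm = tilde_mono[OF ctxK[folded K_def] T0 this]
    have "Rs (gsum (cool G t) (cool H t)) \<le> Ls (gsum (cool G t) (cool H t))"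
      using sum_nonzz[OF good_cool[OF gG t0] good_cool[OF gH t0]] .
    then show ?thesis using VA[OF t0] tm AT by linarith
  qed
  show "temp (gsum G H) \<le> max (temp G) (temp H)" using Tm unfolding T_def K_def m_def a_def b_def .
  show "CL G H"
    unfolding CL_def
  proof (intro allI impI)
    fix s :: real assume s0: "0 \<le> s"
    show "Ls (cool (gsum G H) s) = Ls (gsum (cool G s) (cool H s)) \<and> Rs (cool (gsum G H) s) = Rs (gsum (cool G s) (cool H s))"
    proof (cases "s \<le> T")
      case True
      then show ?thesis using S1'[OF s0] Tm ceqK[of s] unfolding K_def by simp
    next
      case False
      then show ?thesis using late[of s] ceqK[of s] AT unfolding K_def by simp
    qed
  qed
  have KT: "Ls (cool K T) = ga + hb \<and> Rs (cool K T) = ga + hb"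
    using ceqK[of T] late[of "m + 1"] Vfroz[of "m + 1"] Tm AT by simp
  have RHS: "Ls (gsum (cool G a) (cool H b)) = ga + hb \<and> Rs (gsum (cool G a) (cool H b)) = ga + hb"
  proof -
    have "Ls (cool G a) = ga" "Rs (cool G a) = ga" using Gf(2)[of a] unfolding ga_def a_def by auto
    moreover have "Ls (cool H b) = hb" "Rs (cool H b) = hb" using Hf(2)[of b] unfolding hb_def b_def by auto
    ultimately show ?thesis using sum_eq[OF good_cool[OF gG a0] good_cool[OF gH b0]] by simp
  qed
  show "Ls (cool (gsum G H) (temp (gsum G H))) = Ls (gsum (cool G (temp G)) (cool H (temp H)))"
    using KT RHS unfolding K_def T_def a_def b_def by simp
  show "Rs (cool (gsum G H) (temp (gsum G H))) = Rs (gsum (cool G (temp G)) (cool H (temp H)))"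
    using KT RHS unfolding K_def T_def a_def b_def by simp
  show "temp (gsum G H) = temp G" if ba: "temp H < temp G"
  proof (rule ccontr)
    assume ne: "temp (gsum G H) \<noteq> temp G"
    have Ta: "T < a" using ne Tm ba unfolding T_def K_def m_def a_def b_def by simp
    define s where "s = (max T b + a) / 2"
    have s: "0 \<le> s" "T \<le> s" "b < s" "s < a" "s \<le> m"
      using Ta ba T0 b0 unfolding s_def a_def b_def m_def by (auto simp: max_def)
    have "Ls (cool_tilde K s) \<le> Rs (cool_tilde K s)" using tpK s(2) unfolding T_def K_def by auto
    then have le: "Ls (gsum (cool G s) (cool H s)) \<le> Rs (gsum (cool G s) (cool H s))"
      using S1'[OF s(1) s(5)] by simp
    have cHs: "cool H s = num hb" using Hf(3)[of s] s unfolding hb_def b_def by simp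
    have cGs: "cool G s = cool_tilde G s" using Gf(4)[of s] s unfolding a_def by simp
    have gcG: "good (cool G s)" using good_cool[OF gG s(1)] .
    have "Rs (cool_tilde G s) < Ls (cool_tilde G s)" using tpG s unfolding a_def by auto
    then show False using le gcG unfolding cHs by (simp add: gsum_num_right Ls_shift Rs_shift cGs)
  qed
qed

end




lemma CL_all: assumes "good G" "good H" shows "CL G H"
proof (rule pair_induct[of G H CL, OF assms])
  fix X Y assume gX: "good X" and gY: "good Y" and
    IH: "\<And>X' Y'. size X' + size Y' < size X + size Y \<Longrightarrow> good X' \<Longrightarrow> good Y' \<Longrightarrow> CL X' Y'"
  show "CL X Y"
    using gX
  proof (cases rule: good_obtain)
    case (num x)
    have "cool (gsum X Y) s = gsum (cool X s) (cool Y s)" if "0 \<le> s" for s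
      using num gY good_cool[OF gY that] cool_shift[OF gY] by (simp add: gsum_num_left)
    then show ?thesis unfolding CL_def by simp
  next
    case X: (SG xs ys)
    show ?thesis using gY
    proof (cases rule: good_obtain)
      case (num y)
      have "cool (gsum X Y) s = gsum (cool X s) (cool Y s)" if "0 \<le> s" for s
        using num gX good_cool[OF gX that] cool_shift[OF gX] by (simp add: gsum_num_right)
      then show ?thesis unfolding CL_def by simp
    next
      case Y: (SG us vs)
      have ihx0: "CL g Y" if "g \<in> set xs \<union> set ys" for g
        using that IH[of g Y] X size_optL[of g xs "Inl ys"] size_optR[of g ys "Inl xs"] gY by auto
      have ihy0: "CL X h" if "h \<in> set us \<union> set vs" for h
        using that IH[of X h] Y size_optL[of h us "Inl vs"] size_optR[of h vs "Inl us"] gX by auto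
      have ihx: "\<forall>g\<in>set xs \<union> set ys. CL g Y" using ihx0 by blast
      have ihy: "\<forall>h\<in>set us \<union> set vs. CL X h" using ihy0 by blast
      show ?thesis by (rule SG_main(2)[OF X(1) Y(1) gX gY ihx ihy])
    qed
  qed
qed

theorem mainTheorem3:
  fixes G H :: sg
  assumes "is_sg G" and "is_sg H"
    and "dicotic G" and "dicotic H"
    and "nonzugzwang G" and "nonzugzwang H"
    and "terminal_numbers G" and "terminal_numbers H"
  shows "(\<forall>t::real. t \<ge> 0 \<longrightarrow>
            Ls (cool (gsum G H) t) = Ls (gsum (cool G t) (cool H t)) \<and>
            Rs (cool (gsum G H) t) = Rs (gsum (cool G t) (cool H t)))
       \<and> temp (gsum G H) \<le> max (temp G) (temp H)
       \<and> (temp H < temp G \<longrightarrow> temp (gsum G H) = temp G)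
       \<and> Ls (cool (gsum G H) (temp (gsum G H))) = Ls (gsum (cool G (temp G)) (cool H (temp H)))
       \<and> Rs (cool (gsum G H) (temp (gsum G H))) = Rs (gsum (cool G (temp G)) (cool H (temp H)))"
proof -
  have gG: "good G" and gH: "good H" using assms unfolding good_def by auto
  have c1: "\<forall>t::real. t \<ge> 0 \<longrightarrow>
            Ls (cool (gsum G H) t) = Ls (gsum (cool G t) (cool H t)) \<and>
            Rs (cool (gsum G H) t) = Rs (gsum (cool G t) (cool H t))"
    using CL_all[OF gG gH] unfolding CL_def by blast
  have rest: "temp (gsum G H) \<le> max (temp G) (temp H)
       \<and> (temp H < temp G \<longrightarrow> temp (gsum G H) = temp G)
       \<and> Ls (cool (gsum G H) (temp (gsum G H))) = Ls (gsum (cool G (temp G)) (cool H (temp H)))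
       \<and> Rs (cool (gsum G H) (temp (gsum G H))) = Rs (gsum (cool G (temp G)) (cool H (temp H)))"
    using gG
  proof (cases rule: good_obtain)
    case (num x)
    have K: "gsum G H = shift x H" using num gH by (simp add: gsum_num_left)
    have tK: "temp (gsum G H) = temp H" using K cool_shift[OF gH] by simp
    have b0: "0 \<le> temp H" using temp_nonneg[OF gH] .
    have "cool (gsum G H) (temp H) = gsum (cool G 0) (cool H (temp H))"
      using K cool_shift[OF gH] num good_cool[OF gH b0] by (simp add: gsum_num_left)
    then show ?thesis using tK b0 num by simp
  next
    case X: (SG xs ys)
    show ?thesis using gH
    proof (cases rule: good_obtain)
      case (num y)
      have K: "gsum G H = shift y G" using num gG by (simp add: gsum_num_right)
      have tK: "temp (gsum G H) = temp G" using K cool_shift[OF gG] by simp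
      have a0: "0 \<le> temp G" using temp_nonneg[OF gG] .
      have "cool (gsum G H) (temp G) = gsum (cool G (temp G)) (cool H 0)"
        using K cool_shift[OF gG] num good_cool[OF gG a0] by (simp add: gsum_num_right)
      then show ?thesis using tK a0 num by simp
    next
      case Y: (SG us vs)
      have ihx: "\<forall>g\<in>set xs \<union> set ys. CL g H"
        using CL_all gH gG X by (auto dest: good_SG_D)
      have ihy: "\<forall>h\<in>set us \<union> set vs. CL G h"
        using CL_all gH gG Y by (auto dest: good_SG_D)
      note M = SG_main[OF X(1) Y(1) gG gH ihx ihy]
      show ?thesis using M by blast
    qed
  qed
  show ?thesis using c1 rest by blast
qed


end
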